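(* Let $n,k\ge1$, $N=2^n$, and let $\mathcal{C}$ be a class of polynomials in $\mathbb{F}[X_1,\ldots,X_N]$ such that for every $F\in\mathcal{C}$, the shifted polynomial $F(X+\mathbf{1})$ (with $\mathbf{1}$ the all-ones vector) contains a monomial whose support has size at most $k$. Then for every $F\in\mathcal{C}$ with $F\not\equiv 0$, we have $F\circ\mathcal{G}^{\mathrm{SSSV}}_{n,k}(y,z)\not\equiv0$.
   Context: Let $P(z_1,\ldots,z_n,x_1,\ldots,x_n)=\prod_{i=1}^n(z_ix_i+(1-z_i))$, $Q^{\mathrm{SSV}}_{n,k}(y,z,x)=\sum_{j=1}^k y_jP(z_j,x)$ with $z_j=(z_{j,1},\ldots,z_{j,n})$, and $Q^{\mathrm{SSSV}}_{n,k}(y,z,x)=Q^{\mathrm{SSV}}_{n,k}(y,z,x)+\prod_{i=1}^n(x_i+1)$. $\mathcal{G}^{\mathrm{SSSV}}_{n,k}(y,z)$ is the coefficient vector of $Q^{\mathrm{SSSV}}_{n,k}$ viewed as a multilinear polynomial in $x$; its $2^n=N$ coordinates, indexed by subsets $S\subseteq[n]$, are identified with the variables $X_1,\ldots,X_N$ (via $i-1=\sum_{k\in S}2^{k-1}$), and $F\circ\mathcal{G}$ denotes substituting coordinate $i$ of $\mathcal{G}$ for $X_i$. The support of a monomial is the set of variables appearing in it. *)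

theory Defs
  imports Main "HOL-Library.Poly_Mapping"
begin

type_synonym ('v, 'a) mpoly = "('v \<Rightarrow>\<^sub>0 nat) \<Rightarrow>\<^sub>0 'a"

definition mconst :: "'a::zero \<Rightarrow> ('v, 'a) mpoly" where
  "mconst c = Poly_Mapping.single 0 c"

definition mvar :: "'v \<Rightarrow> ('v, 'a::{zero,one}) mpoly" where
  "mvar v = Poly_Mapping.single (Poly_Mapping.single v 1) 1"

definition mvars :: "('v, 'a::zero) mpoly \<Rightarrow> 'v set" where
  "mvars p = \<Union> (Poly_Mapping.keys ` Poly_Mapping.keys (p :: ('v \<Rightarrow>\<^sub>0 nat) \<Rightarrow>\<^sub>0 'a))"

definition msubst :: "('v \<Rightarrow> ('w, 'a::comm_ring_1) mpoly) \<Rightarrow> ('v, 'a) mpoly \<Rightarrow> ('w, 'a) mpoly" where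
  "msubst \<sigma> p = (\<Sum>m\<in>Poly_Mapping.keys p. mconst (Poly_Mapping.lookup p m) * (\<Prod>v\<in>Poly_Mapping.keys m. \<sigma> v ^ Poly_Mapping.lookup m v))"

definition msupport :: "('v \<Rightarrow>\<^sub>0 nat) \<Rightarrow> 'v set" where
  "msupport m = Poly_Mapping.keys m"

definition shift_one :: "('v, 'a::comm_ring_1) mpoly \<Rightarrow> ('v, 'a) mpoly" where
  "shift_one F = msubst (\<lambda>v. mvar v + 1) F"

datatype gvar = XV nat | YV nat | ZV nat nat

definition P_poly :: "nat \<Rightarrow> nat \<Rightarrow> (gvar, 'a::comm_ring_1) mpoly" where
  "P_poly n j = (\<Prod>i\<in>{1..n}. mvar (ZV j i) * mvar (XV i) + (1 - mvar (ZV j i)))"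

definition Q_SSV :: "nat \<Rightarrow> nat \<Rightarrow> (gvar, 'a::comm_ring_1) mpoly" where
  "Q_SSV n k = (\<Sum>j\<in>{1..k}. mvar (YV j) * P_poly n j)"

definition Q_SSSV :: "nat \<Rightarrow> nat \<Rightarrow> (gvar, 'a::comm_ring_1) mpoly" where
  "Q_SSSV n k = Q_SSV n k + (\<Prod>i\<in>{1..n}. mvar (XV i) + 1)"

definition is_xvar :: "gvar \<Rightarrow> bool" where
  "is_xvar v = (\<exists>i. v = XV i)"

text \<open>Coefficient of x^S (S a set of x-indices) of p, viewed as a polynomial in the
  x-variables with coefficients polynomials in the remaining (y,z) variables.\<close>
definition xcoeff :: "nat set \<Rightarrow> (gvar, 'a::comm_ring_1) mpoly \<Rightarrow> (gvar, 'a) mpoly" where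
  "xcoeff S p = (\<Sum>m\<in>{m\<in>Poly_Mapping.keys p. \<forall>i. Poly_Mapping.lookup m (XV i) = (if i \<in> S then 1 else 0)}.
       mconst (Poly_Mapping.lookup p m) * (\<Prod>v\<in>{v\<in>Poly_Mapping.keys m. \<not> is_xvar v}. mvar v ^ Poly_Mapping.lookup m v))"

text \<open>The subset of [n] corresponding to index i \<in> {1..N}: i - 1 = sum of 2^(k-1), k \<in> S.\<close>
definition index_set :: "nat \<Rightarrow> nat \<Rightarrow> nat set" where
  "index_set n i = {k\<in>{1..n}. odd ((i - 1) div 2 ^ (k - 1))}"

text \<open>Coordinate i (1 \<le> i \<le> 2^n) of G^SSSV_{n,k}(y,z).\<close>
definition G_SSSV :: "nat \<Rightarrow> nat \<Rightarrow> nat \<Rightarrow> (gvar, 'a::comm_ring_1) mpoly" where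
  "G_SSSV n k i = xcoeff (index_set n i) (Q_SSSV n k)"

definition compose_G :: "(nat, 'a::comm_ring_1) mpoly \<Rightarrow> nat \<Rightarrow> nat \<Rightarrow> (gvar, 'a) mpoly" where
  "compose_G F n k = msubst (G_SSSV n k) F"

end

theory Submission
  imports Defs
begin


lemma pm_sum_singles: "p = (\<Sum>m\<in>Poly_Mapping.keys p. Poly_Mapping.single m (Poly_Mapping.lookup p m))"
proof (rule poly_mapping_eqI)
  fix k
  show "Poly_Mapping.lookup p k = Poly_Mapping.lookup (\<Sum>m\<in>Poly_Mapping.keys p. Poly_Mapping.single m (Poly_Mapping.lookup p m)) k"
    by (simp add: lookup_sum lookup_single when_def in_keys_iff)
qed

definition mmono :: "('v \<Rightarrow> ('w, 'a::comm_ring_1) mpoly) \<Rightarrow> ('v \<Rightarrow>\<^sub>0 nat) \<Rightarrow> ('w, 'a) mpoly" where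
  "mmono \<sigma> m = (\<Prod>v\<in>Poly_Mapping.keys m. \<sigma> v ^ Poly_Mapping.lookup m v)"

lemma mmono_superset: "finite K \<Longrightarrow> Poly_Mapping.keys m \<subseteq> K \<Longrightarrow> mmono \<sigma> m = (\<Prod>v\<in>K. \<sigma> v ^ Poly_Mapping.lookup m v)"
  unfolding mmono_def by (rule prod.mono_neutral_left) (auto simp: in_keys_iff)

lemma mmono_add: "mmono \<sigma> (a + b) = mmono \<sigma> a * mmono \<sigma> b"
proof -
  let ?K = "Poly_Mapping.keys a \<union> Poly_Mapping.keys b"
  have "mmono \<sigma> (a+b) = (\<Prod>v\<in>?K. \<sigma> v ^ Poly_Mapping.lookup (a+b) v)"
    by (rule mmono_superset) (auto simp: keys_add)
  also have "\<dots> = (\<Prod>v\<in>?K. \<sigma> v ^ Poly_Mapping.lookup a v) * (\<Prod>v\<in>?K. \<sigma> v ^ Poly_Mapping.lookup b v)"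
    by (simp add: lookup_add power_add prod.distrib)
  also have "\<dots> = mmono \<sigma> a * mmono \<sigma> b"
    by (simp add: mmono_superset[of ?K a] mmono_superset[of ?K b])
  finally show ?thesis .
qed

lemma mmono_zero[simp]: "mmono \<sigma> 0 = 1" by (simp add: mmono_def)

lemma mconst_0[simp]: "mconst 0 = 0" by (simp add: mconst_def)
lemma mconst_1[simp]: "mconst 1 = 1" by (simp add: mconst_def)
lemma mconst_add: "mconst (a + b) = mconst a + mconst b" by (simp add: mconst_def single_add)
lemma mconst_mult: "mconst (a * b) = mconst a * mconst b" by (simp add: mconst_def mult_single)

lemma msubst_superset: "finite A \<Longrightarrow> Poly_Mapping.keys p \<subseteq> A \<Longrightarrow>
   msubst \<sigma> p = (\<Sum>m\<in>A. mconst (Poly_Mapping.lookup p m) * mmono \<sigma> m)"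
  unfolding msubst_def mmono_def[symmetric] by (rule sum.mono_neutral_left) (auto simp: in_keys_iff)

lemma msubst_0[simp]: "msubst \<sigma> 0 = 0" by (simp add: msubst_def)

lemma msubst_add: "msubst \<sigma> (p + q) = msubst \<sigma> p + msubst \<sigma> q"
proof -
  let ?A = "Poly_Mapping.keys p \<union> Poly_Mapping.keys q"
  have "msubst \<sigma> (p+q) = (\<Sum>m\<in>?A. mconst (Poly_Mapping.lookup (p+q) m) * mmono \<sigma> m)"
    by (rule msubst_superset) (auto simp: keys_add)
  also have "\<dots> = (\<Sum>m\<in>?A. mconst (Poly_Mapping.lookup p m) * mmono \<sigma> m) + (\<Sum>m\<in>?A. mconst (Poly_Mapping.lookup q m) * mmono \<sigma> m)"
    by (simp add: lookup_add mconst_add distrib_right sum.distrib)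
  also have "\<dots> = msubst \<sigma> p + msubst \<sigma> q"
    by (simp add: msubst_superset[of ?A p] msubst_superset[of ?A q])
  finally show ?thesis .
qed

lemma msubst_sum: "msubst \<sigma> (\<Sum>i\<in>I. f i) = (\<Sum>i\<in>I. msubst \<sigma> (f i))"
  by (induction I rule: infinite_finite_induct) (auto simp: msubst_add)

lemma msubst_single: "msubst \<sigma> (Poly_Mapping.single m c) = mconst c * mmono \<sigma> m"
  by (cases "c = 0") (auto simp: msubst_def mmono_def)

lemma msubst_mult: "msubst \<sigma> (p * q) = msubst \<sigma> p * msubst \<sigma> q"
proof -
  have "p * q = (\<Sum>a\<in>Poly_Mapping.keys p. Poly_Mapping.single a (Poly_Mapping.lookup p a)) *
     (\<Sum>b\<in>Poly_Mapping.keys q. Poly_Mapping.single b (Poly_Mapping.lookup q b))"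
    using pm_sum_singles[of p] pm_sum_singles[of q] by simp
  also have "\<dots> = (\<Sum>a\<in>Poly_Mapping.keys p. \<Sum>b\<in>Poly_Mapping.keys q.
       Poly_Mapping.single (a+b) (Poly_Mapping.lookup p a * Poly_Mapping.lookup q b))"
    by (simp add: sum_distrib_left sum_distrib_right mult_single sum.swap[of _ "Poly_Mapping.keys q"])
  finally have pq: "p * q = \<dots>" .
  have "msubst \<sigma> (p*q) = (\<Sum>a\<in>Poly_Mapping.keys p. \<Sum>b\<in>Poly_Mapping.keys q.
       (mconst (Poly_Mapping.lookup p a) * mmono \<sigma> a) * (mconst (Poly_Mapping.lookup q b) * mmono \<sigma> b))"
    unfolding pq msubst_sum msubst_single mmono_add mconst_mult by (simp add: ac_simps)
  also have "\<dots> = msubst \<sigma> p * msubst \<sigma> q"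
    by (simp add: msubst_def mmono_def sum_distrib_left sum_distrib_right sum.swap[of _ "Poly_Mapping.keys q"])
  finally show ?thesis .
qed

lemma msubst_1[simp]: "msubst \<sigma> 1 = 1"
  using msubst_single[of \<sigma> 0 1] by simp

lemma msubst_mconst[simp]: "msubst \<sigma> (mconst c) = mconst c"
  unfolding mconst_def msubst_single by simp

lemma msubst_mvar[simp]: "msubst \<sigma> (mvar v) = \<sigma> v"
  unfolding mvar_def msubst_single by (simp add: mmono_def)

lemma msubst_neg: "msubst \<sigma> (- p) = - msubst \<sigma> p"
  using msubst_add[of \<sigma> p "-p"] by (metis add.commute add.right_neutral add_right_imp_eq add.right_inverse msubst_0)

lemma msubst_diff: "msubst \<sigma> (p - q) = msubst \<sigma> p - msubst \<sigma> q"
  using msubst_add[of \<sigma> p "-q"] by (simp add: msubst_neg)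

lemma msubst_power: "msubst \<sigma> (p ^ e) = msubst \<sigma> p ^ e"
  by (induction e) (auto simp: msubst_mult)

lemma msubst_prod: "msubst \<sigma> (\<Prod>i\<in>I. f i) = (\<Prod>i\<in>I. msubst \<sigma> (f i))"
  by (induction I rule: infinite_finite_induct) (auto simp: msubst_mult)

lemma msubst_comp: "msubst \<tau> (msubst \<sigma> p) = msubst (\<lambda>v. msubst \<tau> (\<sigma> v)) p"
  unfolding msubst_def[of \<sigma>] by (simp add: msubst_sum msubst_mult msubst_prod msubst_power msubst_def[of _ p])

lemma msubst_cong: "(\<And>v. v \<in> mvars p \<Longrightarrow> \<sigma> v = \<sigma>' v) \<Longrightarrow> msubst \<sigma> p = msubst \<sigma>' p"
  unfolding msubst_def mvars_def
  by (intro sum.cong refl arg_cong2[where f="(*)"] prod.cong) (metis UN_I image_eqI)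



definition xfree :: "(gvar, 'a::comm_ring_1) mpoly \<Rightarrow> bool" where
  "xfree p = (\<forall>m\<in>Poly_Mapping.keys p. \<forall>i. Poly_Mapping.lookup m (XV i) = 0)"

lemma xfree_add: "xfree p \<Longrightarrow> xfree q \<Longrightarrow> xfree (p + q)"
  unfolding xfree_def by (metis (no_types, lifting) UnE keys_add subsetD)
lemma xfree_diff: "xfree p \<Longrightarrow> xfree q \<Longrightarrow> xfree (p - q)"
  unfolding xfree_def by (metis (no_types, lifting) UnE keys_diff subsetD)
lemma xfree_mult: assumes "xfree p" "xfree q" shows "xfree (p * q)"
  unfolding xfree_def
proof (intro ballI allI)
  fix m i assume "m \<in> Poly_Mapping.keys (p * q)"
  then obtain a b where "m = a + b" "a \<in> Poly_Mapping.keys p" "b \<in> Poly_Mapping.keys q"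
    using keys_mult[of p q] by auto
  then show "Poly_Mapping.lookup m (XV i) = 0" using assms
    by (simp add: xfree_def lookup_add)
qed
lemma xfree_one: "xfree 1" by (simp add: xfree_def)
lemma xfree_0: "xfree 0" by (simp add: xfree_def)
lemma xfree_sum: "(\<And>i. i \<in> I \<Longrightarrow> xfree (f i)) \<Longrightarrow> xfree (\<Sum>i\<in>I. f i)"
  by (induction I rule: infinite_finite_induct) (auto intro!: xfree_add simp: xfree_0)
lemma xfree_prod: "(\<And>i. i \<in> I \<Longrightarrow> xfree (f i)) \<Longrightarrow> xfree (\<Prod>i\<in>I. f i)"
  by (induction I rule: infinite_finite_induct) (auto simp: xfree_mult xfree_one)
lemma xfree_mvarY: "xfree (mvar (YV j))"
  by (simp add: xfree_def mvar_def lookup_single)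
lemma xfree_mvarZ: "xfree (mvar (ZV j i))"
  by (simp add: xfree_def mvar_def lookup_single)

lemma mvar_power: "mvar v ^ e = Poly_Mapping.single (Poly_Mapping.single v e) 1"
  by (induction e) (auto simp: mvar_def mult_single single_add[symmetric])

lemma prod_single1: "(\<Prod>v\<in>K. Poly_Mapping.single (f v) (1::'a::comm_ring_1)) = Poly_Mapping.single (\<Sum>v\<in>K. f v) 1"
  by (induction K rule: infinite_finite_induct) (auto simp: mult_single)

lemma mono_mvar: "(\<Prod>v\<in>Poly_Mapping.keys m. (mvar v :: ('v,'a::comm_ring_1) mpoly) ^ Poly_Mapping.lookup m v) = Poly_Mapping.single m 1"
  unfolding mvar_power prod_single1 using pm_sum_singles[of m, symmetric] by simp

definition xm :: "nat set \<Rightarrow> gvar \<Rightarrow>\<^sub>0 nat" where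
  "xm S = (\<Sum>i\<in>S. Poly_Mapping.single (XV i) 1)"

lemma prod_mvarX: "(\<Prod>i\<in>S. (mvar (XV i) :: (gvar,'a::comm_ring_1) mpoly)) = Poly_Mapping.single (xm S) 1"
  unfolding mvar_def xm_def prod_single1 ..

lemma lookup_xm: "finite S \<Longrightarrow> Poly_Mapping.lookup (xm S) v = (if \<exists>i\<in>S. v = XV i then 1 else 0)"
  unfolding xm_def lookup_sum lookup_single
  by (induction S rule: finite_induct) (auto simp: when_def)

definition phi :: "nat set \<Rightarrow> (gvar \<Rightarrow>\<^sub>0 nat) \<Rightarrow> 'a::comm_ring_1 \<Rightarrow> (gvar, 'a) mpoly" where
  "phi S m a = (if \<forall>i. Poly_Mapping.lookup m (XV i) = (if i \<in> S then 1 else 0) then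
      mconst a * (\<Prod>v\<in>{v\<in>Poly_Mapping.keys m. \<not> is_xvar v}. mvar v ^ Poly_Mapping.lookup m v) else 0)"

lemma xcoeff_superset: "finite A \<Longrightarrow> Poly_Mapping.keys p \<subseteq> A \<Longrightarrow>
   xcoeff S p = (\<Sum>m\<in>A. phi S m (Poly_Mapping.lookup p m))"
proof -
  assume A: "finite A" "Poly_Mapping.keys p \<subseteq> A"
  have "xcoeff S p = (\<Sum>m\<in>Poly_Mapping.keys p. phi S m (Poly_Mapping.lookup p m))"
    unfolding xcoeff_def phi_def
    by (simp add: sum.inter_filter)
  also have "\<dots> = (\<Sum>m\<in>A. phi S m (Poly_Mapping.lookup p m))"
    using A by (intro sum.mono_neutral_left) (auto simp: phi_def in_keys_iff)
  finally show ?thesis .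
qed

lemma phi_add: "phi S m (a + b) = phi S m a + phi S m b"
  by (simp add: phi_def mconst_add distrib_right)

lemma xcoeff_add: "xcoeff S (p + q) = xcoeff S p + xcoeff S q"
proof -
  let ?A = "Poly_Mapping.keys p \<union> Poly_Mapping.keys q"
  have "xcoeff S (p+q) = (\<Sum>m\<in>?A. phi S m (Poly_Mapping.lookup (p+q) m))"
    by (rule xcoeff_superset) (auto simp: keys_add)
  also have "\<dots> = (\<Sum>m\<in>?A. phi S m (Poly_Mapping.lookup p m)) + (\<Sum>m\<in>?A. phi S m (Poly_Mapping.lookup q m))"
    by (simp add: lookup_add phi_add sum.distrib)
  also have "\<dots> = xcoeff S p + xcoeff S q"
    by (simp add: xcoeff_superset[of ?A p] xcoeff_superset[of ?A q])
  finally show ?thesis .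
qed

lemma xcoeff_0[simp]: "xcoeff S 0 = 0" by (simp add: xcoeff_def)

lemma xcoeff_sum: "xcoeff S (\<Sum>i\<in>I. f i) = (\<Sum>i\<in>I. xcoeff S (f i))"
  by (induction I rule: infinite_finite_induct) (auto simp: xcoeff_add)

lemma xcoeff_single: "xcoeff S (Poly_Mapping.single m c) = phi S m c"
  using xcoeff_superset[of "{m}" "Poly_Mapping.single m c" S] by simp

lemma xcoeff_xfree_mult:
  assumes T: "finite T" and S: "finite S" and c: "xfree c"
  shows "xcoeff S (c * Poly_Mapping.single (xm T) 1) = (if T = S then c else 0)"
proof -
  have "c * Poly_Mapping.single (xm T) 1 = (\<Sum>m\<in>Poly_Mapping.keys c. Poly_Mapping.single m (Poly_Mapping.lookup c m)) * Poly_Mapping.single (xm T) 1"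
    using pm_sum_singles[of c] by simp
  also have "\<dots> = (\<Sum>m\<in>Poly_Mapping.keys c. Poly_Mapping.single (m + xm T) (Poly_Mapping.lookup c m))"
    by (simp add: sum_distrib_right mult_single)
  finally have eq: "c * Poly_Mapping.single (xm T) 1 = \<dots>" .
  have each: "phi S (m + xm T) (Poly_Mapping.lookup c m) = (if T = S then Poly_Mapping.single m (Poly_Mapping.lookup c m) else 0)"
    if m: "m \<in> Poly_Mapping.keys c" for m
  proof -
    have mx: "\<And>i. Poly_Mapping.lookup m (XV i) = 0" using c m by (auto simp: xfree_def)
    have lk: "Poly_Mapping.lookup (m + xm T) (XV i) = (if i \<in> T then 1 else 0)" for i
      using mx T by (auto simp: lookup_add lookup_xm)
    show ?thesis
    proof (cases "T = S")
      case False
      then obtain i where "(i \<in> T) \<noteq> (i \<in> S)" by blast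
      then have nc: "\<not> (\<forall>i. Poly_Mapping.lookup (m + xm T) (XV i) = (if i \<in> S then 1 else 0))"
        by (metis lk zero_neq_one)
      have "phi S (m + xm T) (Poly_Mapping.lookup c m) = 0"
        unfolding phi_def by (rule if_not_P[OF nc])
      then show ?thesis using False by simp
    next
      case True
      have ks: "{v\<in>Poly_Mapping.keys (m + xm T). \<not> is_xvar v} = Poly_Mapping.keys m"
        using mx T by (auto simp: in_keys_iff lookup_add lookup_xm is_xvar_def)
      have lv: "v \<in> Poly_Mapping.keys m \<Longrightarrow> Poly_Mapping.lookup (m + xm T) v = Poly_Mapping.lookup m v" for v
        using mx T by (auto simp: in_keys_iff lookup_add lookup_xm)
      have "phi S (m + xm T) (Poly_Mapping.lookup c m) = mconst (Poly_Mapping.lookup c m) *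
          (\<Prod>v\<in>Poly_Mapping.keys m. mvar v ^ Poly_Mapping.lookup m v)"
        unfolding phi_def using True lk ks lv by simp
      also have "\<dots> = Poly_Mapping.single m (Poly_Mapping.lookup c m)"
        by (simp add: mono_mvar mconst_def mult_single)
      finally show ?thesis using True by simp
    qed
  qed
  have "xcoeff S (c * Poly_Mapping.single (xm T) 1) = (\<Sum>m\<in>Poly_Mapping.keys c. (if T = S then Poly_Mapping.single m (Poly_Mapping.lookup c m) else 0))"
    unfolding eq xcoeff_sum xcoeff_single using each by (intro sum.cong) auto
  also have "\<dots> = (if T = S then c else 0)"
    using pm_sum_singles[of c] by auto
  finally show ?thesis .
qed



definition cS :: "nat \<Rightarrow> nat \<Rightarrow> nat set \<Rightarrow> (gvar, 'a::comm_ring_1) mpoly" where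
  "cS n k S = (\<Sum>j\<in>{1..k}. mvar (YV j) * ((\<Prod>i\<in>S. mvar (ZV j i)) * (\<Prod>i\<in>{1..n}-S. 1 - mvar (ZV j i)))) + 1"

lemma xfree_cS: "xfree (cS n k S)"
  unfolding cS_def
  by (intro xfree_add xfree_sum xfree_mult xfree_prod xfree_diff xfree_one xfree_mvarY xfree_mvarZ)

lemma P_expand: "(P_poly n j :: (gvar,'a::comm_ring_1) mpoly) =
   (\<Sum>S\<in>Pow {1..n}. ((\<Prod>i\<in>S. mvar (ZV j i)) * (\<Prod>i\<in>{1..n}-S. 1 - mvar (ZV j i))) * Poly_Mapping.single (xm S) 1)"
  unfolding P_poly_def prod_add[OF finite_atLeastAtMost]
  by (intro sum.cong refl) (simp add: prod.distrib prod_mvarX ac_simps)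

lemma X_expand: "(\<Prod>i\<in>{1..n}. mvar (XV i) + 1 :: (gvar,'a::comm_ring_1) mpoly) =
   (\<Sum>S\<in>Pow {1..n}. Poly_Mapping.single (xm S) 1)"
  unfolding prod_add[OF finite_atLeastAtMost]
  by (intro sum.cong refl) (simp add: prod_mvarX)

lemma Q_expand: "(Q_SSSV n k :: (gvar,'a::comm_ring_1) mpoly) =
   (\<Sum>S\<in>Pow {1..n}. cS n k S * Poly_Mapping.single (xm S) 1)"
proof -
  define B :: "nat \<Rightarrow> nat set \<Rightarrow> (gvar,'a) mpoly" where
    "B j S = (\<Prod>i\<in>S. mvar (ZV j i)) * (\<Prod>i\<in>{1..n}-S. 1 - mvar (ZV j i))" for j S
  define M :: "nat set \<Rightarrow> (gvar,'a) mpoly" where "M S = Poly_Mapping.single (xm S) 1" for S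
  have "(\<Sum>j\<in>{1..k}. mvar (YV j) * (\<Sum>S\<in>Pow {1..n}. B j S * M S))
      = (\<Sum>j\<in>{1..k}. \<Sum>S\<in>Pow {1..n}. mvar (YV j) * (B j S * M S))"
    by (simp add: sum_distrib_left)
  also have "\<dots> = (\<Sum>S\<in>Pow {1..n}. \<Sum>j\<in>{1..k}. mvar (YV j) * (B j S * M S))"
    by (rule sum.swap)
  also have "\<dots> = (\<Sum>S\<in>Pow {1..n}. (\<Sum>j\<in>{1..k}. mvar (YV j) * B j S) * M S)"
    by (simp add: sum_distrib_right mult.assoc)
  finally have e: "(\<Sum>j\<in>{1..k}. mvar (YV j) * (\<Sum>S\<in>Pow {1..n}. B j S * M S))
      = (\<Sum>S\<in>Pow {1..n}. (\<Sum>j\<in>{1..k}. mvar (YV j) * B j S) * M S)" .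
  have "(Q_SSSV n k :: (gvar,'a) mpoly) = (\<Sum>j\<in>{1..k}. mvar (YV j) * (\<Sum>S\<in>Pow {1..n}. B j S * M S)) + (\<Sum>S\<in>Pow {1..n}. M S)"
    unfolding Q_SSSV_def Q_SSV_def P_expand X_expand B_def M_def ..
  also have "\<dots> = (\<Sum>S\<in>Pow {1..n}. cS n k S * M S)"
    unfolding e by (simp add: cS_def B_def distrib_right sum.distrib)
  finally show ?thesis unfolding M_def .
qed

lemma xcoeff_Q: "S \<subseteq> {1..n} \<Longrightarrow> xcoeff S (Q_SSSV n k :: (gvar,'a::comm_ring_1) mpoly) = cS n k S"
proof -
  assume S: "S \<subseteq> {1..n}"
  have fS: "finite S" using S finite_subset by blast
  have "xcoeff S (Q_SSSV n k :: (gvar,'a) mpoly) = (\<Sum>T\<in>Pow {1..n}. if T = S then cS n k T else 0)"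
    unfolding Q_expand xcoeff_sum
    by (intro sum.cong refl xcoeff_xfree_mult xfree_cS fS) (auto intro: finite_subset)
  also have "\<dots> = cS n k S" using S by simp
  finally show ?thesis .
qed



lemma index_set_sub: "index_set n i \<subseteq> {1..n}"
  by (auto simp: index_set_def)

lemma index_set_inj:
  assumes i: "i \<in> {1..2^n}" and t: "t \<in> {1..2^n}" and e: "index_set n i = index_set n t"
  shows "i = t"
proof -
  have a: "i - 1 < 2^n" "t - 1 < 2^n" using i t by auto
  have "bit (i - 1) m = bit (t - 1) m" for m
  proof (cases "m < n")
    case True
    then have "(Suc m \<in> index_set n i) = (Suc m \<in> index_set n t)" using e by simp
    then show ?thesis using True by (simp add: index_set_def bit_iff_odd)
  next
    case False
    then have "(2::nat)^n \<le> 2^m" by simp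
    then have "(i - 1) div 2^m = 0" "(t - 1) div 2^m = 0" using a by (meson div_less less_le_trans)+
    then show ?thesis by (simp add: bit_iff_odd)
  qed
  then have "i - 1 = t - 1" by (simp add: bit_eq_iff)
  then show ?thesis using i t by auto
qed

lemma prod01:
  fixes U S A :: "nat set"
  assumes "finite A" "S \<subseteq> A" "U \<subseteq> A"
  shows "(\<Prod>i\<in>S. (if i \<in> U then 1 else 0 :: 'b::comm_ring_1)) * (\<Prod>i\<in>A-S. 1 - (if i \<in> U then 1 else 0))
     = (if S = U then 1 else 0)"
proof (cases "S = U")
  case True then show ?thesis by simp
next
  case False
  then obtain i where "i \<in> S - U \<or> i \<in> U - S" by blast
  then show ?thesis
  proof
    assume i: "i \<in> S - U"
    have "(\<Prod>i\<in>S. (if i \<in> U then 1 else 0 :: 'b)) = 0"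
      using i assms finite_subset by (intro prod_zero) auto
    then show ?thesis using False by simp
  next
    assume i: "i \<in> U - S"
    have "(\<Prod>i\<in>A-S. 1 - (if i \<in> U then 1 else 0 :: 'b)) = 0"
      using i assms by (intro prod_zero) auto
    then show ?thesis using False by simp
  qed
qed

lemma restrict_nonzero:
  assumes m0: "m0 \<in> Poly_Mapping.keys p" and T: "T = Poly_Mapping.keys m0"
  shows "msubst (\<lambda>i. if i \<in> T then mvar i else 0) (p :: ('v,'a::comm_ring_1) mpoly) \<noteq> 0"
proof -
  let ?\<tau> = "\<lambda>i. if i \<in> T then mvar i else 0 :: ('v,'a) mpoly"
  have tm: "mconst (Poly_Mapping.lookup p m) * mmono ?\<tau> m =
     (if Poly_Mapping.keys m \<subseteq> T then Poly_Mapping.single m (Poly_Mapping.lookup p m) else 0)" for m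
  proof (cases "Poly_Mapping.keys m \<subseteq> T")
    case True
    then have "mmono ?\<tau> m = (\<Prod>v\<in>Poly_Mapping.keys m. mvar v ^ Poly_Mapping.lookup m v)"
      unfolding mmono_def by (intro prod.cong) auto
    then show ?thesis using True by (simp add: mono_mvar mconst_def mult_single)
  next
    case False
    then obtain v where v: "v \<in> Poly_Mapping.keys m" "v \<notin> T" by blast
    have "mmono ?\<tau> m = 0"
    proof -
      have "?\<tau> v ^ Poly_Mapping.lookup m v = 0" using v by (simp add: in_keys_iff zero_power)
      then show ?thesis unfolding mmono_def using v(1) by (intro prod_zero finite_keys bexI[where x=v])
    qed
    then show ?thesis using False by simp
  qed
  have "Poly_Mapping.lookup (msubst ?\<tau> p) m0 =
     (\<Sum>m\<in>Poly_Mapping.keys p. Poly_Mapping.lookup (if Poly_Mapping.keys m \<subseteq> T then Poly_Mapping.single m (Poly_Mapping.lookup p m) else 0) m0)"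
    unfolding msubst_def mmono_def[symmetric] tm lookup_sum ..
  also have "\<dots> = (\<Sum>m\<in>Poly_Mapping.keys p. if m = m0 then Poly_Mapping.lookup p m0 else 0)"
    using T by (intro sum.cong refl) (auto simp: lookup_single when_def)
  also have "\<dots> = Poly_Mapping.lookup p m0" using m0 by simp
  finally show ?thesis using m0 by (auto simp: in_keys_iff)
qed



theorem lemma5p7:
  fixes n k :: nat and C :: "(nat, 'a::field) mpoly set"
  assumes "n \<ge> 1" and "k \<ge> 1"
    and "\<forall>F\<in>C. mvars F \<subseteq> {1..2 ^ n}"
    and "\<forall>F\<in>C. \<exists>m\<in>Poly_Mapping.keys (shift_one F). card (msupport m) \<le> k"
  shows "\<forall>F\<in>C. F \<noteq> 0 \<longrightarrow> compose_G F n k \<noteq> 0"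
proof (intro ballI impI)
  fix F assume FC: "F \<in> C" and "F \<noteq> 0"
  have vars: "mvars F \<subseteq> {1..2^n}" using assms(3) FC by blast
  obtain m0 where m0: "m0 \<in> Poly_Mapping.keys (shift_one F)" and cm: "card (Poly_Mapping.keys m0) \<le> k"
    using assms(4) FC unfolding msupport_def by blast
  define T where "T = Poly_Mapping.keys m0"
  define T' where "T' = T \<inter> {1..2^n}"
  have fT': "finite T'" by (simp add: T'_def)
  have T'sub: "T' \<subseteq> {1..2^n}" by (simp add: T'_def)
  have "card T' \<le> card {1..k}"
  proof -
    have "card T' \<le> card T" unfolding T'_def T_def by (intro card_mono) auto
    then show ?thesis using cm unfolding T_def by simp
  qed
  then obtain f where fim: "f ` T' \<subseteq> {1..k}" and finj: "inj_on f T'"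
    using card_le_inj[of T' "{1..k}"] fT' by auto
  define g where "g = the_inv_into T' f"
  have gf: "t \<in> T' \<Longrightarrow> g (f t) = t" for t
    unfolding g_def using finj by (simp add: the_inv_into_f_f)
  define \<rho> :: "gvar \<Rightarrow> (nat,'a) mpoly" where
    "\<rho> v = (case v of XV i \<Rightarrow> 0
       | YV j \<Rightarrow> if j \<in> f ` T' then mvar (g j) else 0
       | ZV j i \<Rightarrow> if j \<in> f ` T' \<and> i \<in> index_set n (g j) then 1 else 0)" for v
  have claim1: "msubst \<rho> (G_SSSV n k i) = (if i \<in> T' then mvar i else 0) + 1"
    if i: "i \<in> {1..2^n}" for i
  proof -
    let ?S = "index_set n i"
    have Ssub: "?S \<subseteq> {1..n}" by (rule index_set_sub)
    have tj: "\<rho> (YV j) * ((\<Prod>l\<in>?S. \<rho> (ZV j l)) * (\<Prod>l\<in>{1..n}-?S. 1 - \<rho> (ZV j l)))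
        = (if j \<in> f ` T' \<and> g j = i then mvar i else 0)" for j
    proof (cases "j \<in> f ` T'")
      case True
      then have gT: "g j \<in> T'" using gf by auto
      have "(\<Prod>l\<in>?S. \<rho> (ZV j l)) * (\<Prod>l\<in>{1..n}-?S. 1 - \<rho> (ZV j l))
          = (\<Prod>l\<in>?S. (if l \<in> index_set n (g j) then 1 else 0)) * (\<Prod>l\<in>{1..n}-?S. 1 - (if l \<in> index_set n (g j) then 1 else 0))"
        using True by (simp add: \<rho>_def)
      also have "\<dots> = (if ?S = index_set n (g j) then 1 else 0)"
        by (rule prod01) (auto simp: index_set_def)
      also have "\<dots> = (if g j = i then 1 else 0)"
        using index_set_inj[of i n "g j"] i gT T'sub by auto
      finally show ?thesis using True by (auto simp: \<rho>_def)
    next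
      case False
      then show ?thesis by (simp add: \<rho>_def)
    qed
    have "msubst \<rho> (G_SSSV n k i) = msubst \<rho> (cS n k ?S)"
      unfolding G_SSSV_def by (subst xcoeff_Q[OF Ssub]) (rule refl)
    also have "\<dots> = (\<Sum>j\<in>{1..k}. \<rho> (YV j) * ((\<Prod>l\<in>?S. \<rho> (ZV j l)) * (\<Prod>l\<in>{1..n}-?S. 1 - \<rho> (ZV j l)))) + 1"
      unfolding cS_def by (simp add: msubst_add msubst_sum msubst_mult msubst_prod msubst_diff)
    also have "(\<Sum>j\<in>{1..k}. \<rho> (YV j) * ((\<Prod>l\<in>?S. \<rho> (ZV j l)) * (\<Prod>l\<in>{1..n}-?S. 1 - \<rho> (ZV j l))))
        = (\<Sum>j\<in>{1..k}. if j \<in> f ` T' \<and> g j = i then mvar i else 0)"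
      using tj by simp
    also have "\<dots> = (\<Sum>j\<in>f ` T'. if g j = i then mvar i else 0)"
      using fim by (intro sum.mono_neutral_cong_right) auto
    also have "\<dots> = (\<Sum>t\<in>T'. if t = i then mvar i else 0)"
      using finj gf by (simp add: sum.reindex)
    also have "\<dots> = (if i \<in> T' then mvar i else 0)"
      using fT' by simp
    finally show ?thesis .
  qed
  have "msubst \<rho> (compose_G F n k) = msubst (\<lambda>i. msubst \<rho> (G_SSSV n k i)) F"
    unfolding compose_G_def by (rule msubst_comp)
  also have "\<dots> = msubst (\<lambda>i. (if i \<in> T then mvar i else 0) + 1) F"
    using vars claim1 by (intro msubst_cong) (auto simp: T'_def)
  also have "\<dots> = msubst (\<lambda>i. if i \<in> T then mvar i else 0) (shift_one F)"
    unfolding shift_one_def msubst_comp by (simp add: msubst_add)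
  finally have eq: "msubst \<rho> (compose_G F n k) = msubst (\<lambda>i. if i \<in> T then mvar i else 0) (shift_one F)" .
  have "msubst (\<lambda>i. if i \<in> T then mvar i else 0) (shift_one F) \<noteq> 0"
    by (rule restrict_nonzero[OF m0 T_def])
  then show "compose_G F n k \<noteq> 0" using eq by auto
qed


end
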